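(* Let $(t_n(x))_{n\ge0}$ be the generalized Gončarov basis associated with $(\mathfrak d,\mathcal Z)$, $\mathcal Z=(z_i)_{i\ge0}$, and let $d(t)\in\mathbb K[[t]]$ be the compositional inverse of the $D$-indicator of $\mathfrak d$. Then, as formal power series in $t$ with coefficients in $\mathbb K[x]$, $$e^{x\,d(t)}=\sum_{n\ge0}\frac{1}{n!}\,t_n(x)\,e^{z_n d(t)}\,t^n.$$ In particular, if $\mathfrak d=D$, then $e^{xt}=\sum_{n\ge0}\frac1{n!}t_n(x)e^{z_nt}t^n$.
   Context: $\mathbb K$ is a field of characteristic zero, $D=d/dx$ on $\mathbb K[x]$. A delta operator is a linear operator $\mathfrak d$ on $\mathbb K[x]$ commuting with all shifts $E_a:f(x)\mapsto f(x+a)$ and with $\mathfrak d(x)$ a nonzero constant. Every shift-invariant operator $S$ can be written uniquely as $S=\sum_{k\ge0}c_kD^k$; the formal power series $q(t)=\sum_k c_kt^k$ is its $D$-indicator. For a delta operator, $q(0)=0$ and $q'(0)\neq0$, so $q$ has a compositional inverse $d(t)$. $\varepsilon_z$ is evaluation at $z$. The generalized Gončarov basis associated with $(\mathfrak d,\mathcal Z)$ is the unique sequence $(t_n)_{n\ge0}$ with $\deg t_n=n$ and $\varepsilon_{z_i}(\mathfrak d^{\,i}(t_n))=n!\,\delta_{i,n}$ for all $i,n$. *)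

theory Defs
  imports "HOL-Computational_Algebra.Computational_Algebra"
begin

definition lin_op :: "('a::field poly \<Rightarrow> 'a poly) \<Rightarrow> bool" where
  "lin_op S \<longleftrightarrow> (\<forall>p q. S (p + q) = S p + S q) \<and> (\<forall>c p. S (smult c p) = smult c (S p))"

definition shift_op :: "'a::field \<Rightarrow> 'a poly \<Rightarrow> 'a poly" where
  "shift_op a p = pcompose p [:a, 1:]"

definition shift_invariant :: "('a::field poly \<Rightarrow> 'a poly) \<Rightarrow> bool" where
  "shift_invariant S \<longleftrightarrow> (\<forall>a p. S (shift_op a p) = shift_op a (S p))"

definition delta_operator :: "('a::field poly \<Rightarrow> 'a poly) \<Rightarrow> bool" where
  "delta_operator S \<longleftrightarrow> lin_op S \<and> shift_invariant S \<and> (\<exists>c. c \<noteq> 0 \<and> S [:0, 1:] = [:c:])"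

text \<open>q is the D-indicator of S: S = sum_k q_k D^k (the sum is finite on each polynomial,
  since D^k p = 0 for k > deg p).\<close>
definition D_indicator :: "('a::field_char_0 poly \<Rightarrow> 'a poly) \<Rightarrow> 'a fps \<Rightarrow> bool" where
  "D_indicator S q \<longleftrightarrow> (\<forall>p. S p = (\<Sum>k\<le>degree p. smult (q $ k) ((pderiv ^^ k) p)))"

definition goncarov_basis ::
  "('a::field_char_0 poly \<Rightarrow> 'a poly) \<Rightarrow> (nat \<Rightarrow> 'a) \<Rightarrow> (nat \<Rightarrow> 'a poly) \<Rightarrow> bool" where
  "goncarov_basis S z t \<longleftrightarrow>
     (\<forall>n. degree (t n) = n \<and>
          (\<forall>i. poly ((S ^^ i) (t n)) (z i) = (if i = n then fact n else 0)))"

definition lift_fps :: "'a::zero fps \<Rightarrow> 'a poly fps" where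
  "lift_fps f = Abs_fps (\<lambda>n. [:f $ n:])"

definition exp_x_fps :: "'a::field_char_0 poly fps" where
  "exp_x_fps = Abs_fps (\<lambda>k. monom (inverse (fact k)) k)"

end

theory Submission
  imports Defs
begin



lemma coeff_pderiv_funpow:
  fixes p :: "'a::field_char_0 poly"
  shows "coeff ((pderiv ^^ j) p) k = coeff p (k+j) * fact (k+j) / fact k"
proof (induction j arbitrary: k)
  case 0 then show ?case by simp
next
  case (Suc j)
  have "coeff ((pderiv ^^ Suc j) p) k = of_nat (Suc k) * coeff ((pderiv ^^ j) p) (Suc k)"
    by (simp add: coeff_pderiv)
  also have "\<dots> = of_nat (Suc k) * (coeff p (Suc k + j) * fact (Suc k + j) / fact (Suc k))"
    using Suc by simp
  also have "\<dots> = coeff p (k + Suc j) * fact (k + Suc j) / fact k"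
    by (simp add: fact_Suc field_simps del: of_nat_Suc)
  finally show ?case .
qed

lemma delta_coeff:
  fixes \<delta> :: "'a::field_char_0 poly \<Rightarrow> 'a poly"
  assumes "D_indicator \<delta> q" "degree p \<le> N"
  shows "coeff (\<delta> p) k = (\<Sum>j\<le>N. q$j * coeff p (k+j) * fact (k+j) / fact k)"
proof -
  have "coeff (\<delta> p) k = (\<Sum>j\<le>degree p. q$j * coeff p (k+j) * fact (k+j) / fact k)"
    using assms(1) unfolding D_indicator_def
    by (simp add: coeff_sum coeff_pderiv_funpow mult.assoc)
  also have "\<dots> = (\<Sum>j\<le>N. q$j * coeff p (k+j) * fact (k+j) / fact k)"
    by (rule sum.mono_neutral_left) (use assms(2) in \<open>auto simp: coeff_eq_0\<close>)
  finally show ?thesis .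
qed

lemma lin_op_0: "lin_op S \<Longrightarrow> S 0 = 0"
  unfolding lin_op_def by (metis smult_0_left)

lemma lin_op_diff: "lin_op S \<Longrightarrow> S (p - r) = S p - S r"
  unfolding lin_op_def by (metis add_diff_cancel diff_add_cancel)

lemma lin_op_sum: "lin_op S \<Longrightarrow> S (\<Sum>i\<in>A. f i) = (\<Sum>i\<in>A. S (f i))"
  by (induction A rule: infinite_finite_induct) (auto simp: lin_op_0 lin_op_def)

lemma lin_op_funpow: "lin_op S \<Longrightarrow> lin_op (S ^^ n)"
  by (induction n) (auto simp: lin_op_def)

lemma lin_op_smult: "lin_op S \<Longrightarrow> S (smult c p) = smult c (S p)"
  unfolding lin_op_def by blast

lemma indicator_q0:
  assumes "delta_operator \<delta>" "D_indicator \<delta> q"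
  shows "q$0 = 0" "q$1 \<noteq> 0"
proof -
  obtain c where c: "c \<noteq> 0" "\<delta> [:0,1:] = [:c:]" using assms(1) unfolding delta_operator_def by blast
  have "coeff (\<delta> [:0,1:]) 1 = q$0" using delta_coeff[OF assms(2), of "[:0,1:]" 1 1]
    by simp
  moreover have "coeff (\<delta> [:0,1:]) 0 = q$1" using delta_coeff[OF assms(2), of "[:0,1:]" 1 0]
    by simp
  ultimately show "q$0 = 0" "q$1 \<noteq> 0" using c by auto
qed



lemma const_poly_add: "[:a + b:] = [:a:] + [:b:]"
  by (simp add: add_pCons)

lemma const_poly_sum: "[:sum f A:] = (\<Sum>i\<in>A. [:f i:])"
  by (induction A rule: infinite_finite_induct) (auto simp: const_poly_add)

lemma monom_mult_const: "monom a i * [:b:] = monom (a * b) i"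
  by (metis monom_0 mult_monom add_0_right)

lemma lift_fps_nth[simp]: "lift_fps f $ n = [:f $ n:]"
  by (simp add: lift_fps_def)

lemma lift_fps_mult: "lift_fps (a * b :: 'a::comm_ring_1 fps) = lift_fps a * lift_fps b"
  by (rule fps_ext) (simp add: fps_mult_nth const_poly_sum mult.commute)

lemma lift_fps_one: "lift_fps (1 :: 'a::comm_ring_1 fps) = 1"
  by (rule fps_ext) (simp add: lift_fps_def)

lemma lift_fps_power: "lift_fps (a ^ n :: 'a::comm_ring_1 fps) = lift_fps a ^ n"
  by (induction n) (simp_all add: lift_fps_one lift_fps_mult)

definition Pm :: "'a::field_char_0 fps \<Rightarrow> nat \<Rightarrow> 'a poly" where
  "Pm d m = (\<Sum>i\<le>m. monom ((d^i)$m / fact i) i)"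

lemma exp_compose_nth:
  fixes d :: "'a::field_char_0 fps"
  shows "(exp_x_fps oo lift_fps d) $ m = Pm d m"
  unfolding fps_compose_nth Pm_def exp_x_fps_def lift_fps_power[symmetric] atLeast0AtMost
  by (intro sum.cong refl) (simp add: monom_mult_const smult_monom field_simps)

lemma Pm_coeff:
  fixes d :: "'a::field_char_0 fps"
  assumes "d$0 = 0"
  shows "coeff (Pm d m) k = (d^k)$m / fact k"
  using startsby_zero_power_prefix[OF assms, of k]
  by (auto simp: Pm_def coeff_sum)

lemma Pm_degree:
  fixes d :: "'a::field_char_0 fps"
  shows "degree (Pm d m) \<le> m"
  unfolding Pm_def
  by (rule degree_sum_le) (auto simp: degree_monom_le intro: order.trans[OF degree_monom_le])

lemma Pm_poly:
  fixes d :: "'a::field_char_0 fps"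
  shows "poly (Pm d m) x = (fps_exp x oo d) $ m"
  unfolding Pm_def fps_compose_nth poly_sum poly_monom atLeast0AtMost
  by (intro sum.cong refl) simp



lemma sum_q_identity:
  fixes d q :: "'a::field_char_0 fps"
  assumes d0: "d$0 = 0"
  shows "(\<Sum>j\<le>M. q$j * (d^(k+j))$M) = (d^k * (q oo d))$M"
proof -
  define f where "f i = (if i < k then 0 else q$(i-k)) * (d^i)$M" for i
  have Xk: "fps_X^k oo d = d^k"
    using fps_compose_power[OF d0, of fps_X k] d0 by simp
  have "d^k * (q oo d) = (fps_X^k * q) oo d"
    by (simp only: fps_compose_mult_distrib[OF d0] Xk)
  also have "\<dots> $ M = (\<Sum>i=0..M. f i)"
    unfolding fps_compose_nth f_def
    by (intro sum.cong refl) (simp add: mult.commute[of "fps_X^k"] fps_X_power_mult_right_nth)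
  also have "\<dots> = (\<Sum>i=0..M+k. f i)"
    by (rule sum.mono_neutral_left) (auto simp: f_def startsby_zero_power_prefix[OF d0])
  also have "\<dots> = (\<Sum>i=0..<k. f i) + (\<Sum>i=k..M+k. f i)"
    unfolding atLeastLessThanSuc_atLeastAtMost[symmetric]
    by (rule sum.atLeastLessThan_concat[symmetric]) auto
  also have "(\<Sum>i=0..<k. f i) = 0" by (simp add: f_def)
  also have "(\<Sum>i=k..M+k. f i) = (\<Sum>i=0..M. f (i+k))"
    using sum.shift_bounds_cl_nat_ivl[of f 0 k M] by simp
  also have "\<dots> = (\<Sum>j\<le>M. q$j * (d^(k+j))$M)"
    unfolding atLeast0AtMost by (intro sum.cong refl) (simp add: f_def add.commute)
  finally show ?thesis by simp
qed



lemma delta_Pm_Suc: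
  fixes d q :: "'a::field_char_0 fps"
  assumes ind: "D_indicator \<delta> q" and d0: "d$0 = 0" and qd: "q oo d = fps_X"
  shows "\<delta> (Pm d (Suc m)) = Pm d m"
proof (rule poly_eqI)
  fix k
  have "coeff (\<delta> (Pm d (Suc m))) k
      = (\<Sum>j\<le>Suc m. q$j * ((d^(k+j))$(Suc m) / fact (k+j)) * fact (k+j) / fact k)"
    using delta_coeff[OF ind Pm_degree] Pm_coeff[OF d0] by simp
  also have "\<dots> = (\<Sum>j\<le>Suc m. q$j * (d^(k+j))$(Suc m)) / fact k"
    by (subst sum_divide_distrib) (intro sum.cong refl; simp)
  also have "\<dots> = (d^k * fps_X)$(Suc m) / fact k"
    by (simp add: sum_q_identity[OF d0] qd)
  also have "\<dots> = coeff (Pm d m) k"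
    using fps_X_power_mult_right_nth[of "d^k" 1 "Suc m"] by (simp add: Pm_coeff[OF d0])
  finally show "coeff (\<delta> (Pm d (Suc m))) k = coeff (Pm d m) k" .
qed

lemma delta_Pm_0:
  fixes d q :: "'a::field_char_0 fps"
  assumes ind: "D_indicator \<delta> q" and q0: "q$0 = 0"
  shows "\<delta> (Pm d 0) = 0"
proof (rule poly_eqI)
  fix k show "coeff (\<delta> (Pm d 0)) k = coeff 0 k"
    using delta_coeff[OF ind Pm_degree[of d 0]] q0 by simp
qed

lemma delta_pow_Pm:
  fixes d q :: "'a::field_char_0 fps"
  assumes lin: "lin_op \<delta>" and ind: "D_indicator \<delta> q" and q0: "q$0 = 0"
    and d0: "d$0 = 0" and qd: "q oo d = fps_X"
  shows "(\<delta>^^n) (Pm d m) = (if n \<le> m then Pm d (m-n) else 0)"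
proof (induction n)
  case 0 then show ?case by simp
next
  case (Suc n)
  show ?case
  proof (cases "Suc n \<le> m")
    case True
    then have "m - n = Suc (m - Suc n)" by simp
    then show ?thesis using Suc True delta_Pm_Suc[OF ind d0 qd, of "m - Suc n"] by simp
  next
    case False
    then show ?thesis using Suc delta_Pm_0[OF ind q0, of d] lin_op_0[OF lin]
      by (auto simp: le_Suc_eq)
  qed
qed

lemma delta_degree:
  fixes q :: "'a::field_char_0 fps"
  assumes ind: "D_indicator \<delta> q" and q0: "q$0 = 0"
  shows "degree (\<delta> g) \<le> degree g - 1"
proof (rule degree_le, intro allI impI)
  fix i assume "degree g - 1 < i"
  then have i: "degree g \<le> i" by simp
  show "coeff (\<delta> g) i = 0"
    unfolding delta_coeff[OF ind order.refl]
  proof (rule sum.neutral, intro ballI)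
    fix j assume "j \<in> {..degree g}"
    show "q $ j * coeff g (i + j) * fact (i + j) / fact i = 0"
      using i q0 by (cases "j = 0") (auto simp: coeff_eq_0)
  qed
qed

lemma delta_zero_const:
  fixes q :: "'a::field_char_0 fps"
  assumes ind: "D_indicator \<delta> q" and q0: "q$0 = 0" and q1: "q$1 \<noteq> 0" and z: "\<delta> g = 0"
  shows "degree g = 0"
proof (rule ccontr)
  assume "degree g \<noteq> 0"
  then obtain e where e: "degree g = Suc e" by (cases "degree g") auto
  define f where "f j = q$j * coeff g (e+j) * fact (e+j) / (fact e :: 'a)" for j
  have "0 = coeff (\<delta> g) e" using z by simp
  also have "\<dots> = (\<Sum>j\<le>Suc e. f j)"
    unfolding f_def delta_coeff[OF ind order.refl] e ..
  also have "\<dots> = f 1 + (\<Sum>j\<in>{..Suc e} - {1}. f j)"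
    by (rule sum.remove) auto
  also have "(\<Sum>j\<in>{..Suc e} - {1}. f j) = 0"
  proof (rule sum.neutral, intro ballI)
    fix j assume j: "j \<in> {..Suc e} - {1}"
    show "f j = 0"
    proof (cases "j = 0")
      case True then show ?thesis by (simp add: f_def q0)
    next
      case False
      with j have "e + j > degree g" using e by auto
      then show ?thesis by (simp add: f_def coeff_eq_0)
    qed
  qed
  finally have "f 1 = 0" by simp
  moreover have "g \<noteq> 0" using e by auto
  then have "coeff g (Suc e) \<noteq> 0" using e by (metis leading_coeff_0_iff)
  moreover have "(1::'a) + of_nat e \<noteq> 0" by (metis of_nat_Suc of_nat_eq_0_iff Suc_neq_Zero)
  ultimately show False using q1 by (simp add: f_def)
qed

lemma uniq:
  fixes q :: "'a::field_char_0 fps"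
  assumes ind: "D_indicator \<delta> q" and q0: "q$0 = 0" and q1: "q$1 \<noteq> 0"
  shows "degree g \<le> m \<Longrightarrow> (\<forall>i\<le>m. poly ((\<delta>^^i) g) (z i) = 0) \<Longrightarrow> g = 0"
proof (induction m arbitrary: g z)
  case 0
  then have "g = [:coeff g 0:]" by (metis degree_0_id le_zero_eq)
  moreover have "poly g (z 0) = 0" using 0 by auto
  ultimately have "coeff g 0 = 0" by (metis poly_const_conv)
  with \<open>g = [:coeff g 0:]\<close> show ?case by simp
next
  case (Suc m)
  have "degree (\<delta> g) \<le> m" using delta_degree[OF ind q0, of g] Suc.prems by simp
  moreover have "\<forall>i\<le>m. poly ((\<delta>^^i) (\<delta> g)) (z (Suc i)) = 0"
    using Suc.prems(2) by (auto simp: funpow_Suc_right simp del: funpow.simps)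
  ultimately have "\<delta> g = 0" using Suc.IH[of "\<delta> g" "z \<circ> Suc"] by simp
  then have "degree g = 0" using delta_zero_const[OF ind q0 q1] by blast
  then have "g = [:coeff g 0:]" by (metis degree_0_id)
  moreover have "poly g (z 0) = 0" using Suc.prems(2) by auto
  ultimately have "coeff g 0 = 0" by (metis poly_const_conv)
  with \<open>g = [:coeff g 0:]\<close> show ?case by simp
qed



lemma expansion:
  fixes q :: "'a::field_char_0 fps"
  assumes lin: "lin_op \<delta>" and ind: "D_indicator \<delta> q" and q0: "q$0 = 0" and q1: "q$1 \<noteq> 0"
    and gb: "goncarov_basis \<delta> z t"
  shows "Pm (fps_inv q) m = (\<Sum>n\<le>m. smult (poly (Pm (fps_inv q) (m-n)) (z n) / fact n) (t n))"
proof -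
  define d where "d = fps_inv q"
  have d0: "d$0 = 0" by (simp add: d_def fps_inv_def)
  have qd: "q oo d = fps_X" unfolding d_def by (rule fps_inv_right[OF q0 q1])
  define c where "c n = poly (Pm d (m-n)) (z n) / fact n" for n
  define g where "g = Pm d m - (\<Sum>n\<le>m. smult (c n) (t n))"
  have tdeg: "degree (t n) = n" and tev: "poly ((\<delta>^^i) (t n)) (z i) = (if i = n then fact n else 0)" for n i
    using gb unfolding goncarov_basis_def by auto
  have "degree g \<le> m"
    unfolding g_def
    by (intro degree_diff_le Pm_degree degree_sum_le)
       (auto intro: order.trans[OF degree_smult_le] simp: tdeg)
  moreover have "\<forall>i\<le>m. poly ((\<delta>^^i) g) (z i) = 0"
  proof (intro allI impI)
    fix i assume i: "i \<le> m"
    have L: "lin_op (\<delta>^^i)" by (rule lin_op_funpow[OF lin])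
    have "(\<delta>^^i) g = Pm d (m-i) - (\<Sum>n\<le>m. smult (c n) ((\<delta>^^i) (t n)))"
      unfolding g_def lin_op_diff[OF L] lin_op_sum[OF L] lin_op_smult[OF L]
      using delta_pow_Pm[OF lin ind q0 d0 qd, of i m] i by simp
    also have "poly \<dots> (z i) = poly (Pm d (m-i)) (z i) - (\<Sum>n\<le>m. c n * (if i = n then fact n else 0))"
      by (simp add: poly_sum tev)
    also have "(\<Sum>n\<le>m. c n * (if i = n then fact n else 0)) = c i * fact i"
      using i by (simp add: if_distrib[of "\<lambda>x. c _ * x"] sum.delta cong: if_cong)
    also have "c i * fact i = poly (Pm d (m-i)) (z i)" by (simp add: c_def)
    finally show "poly ((\<delta>^^i) g) (z i) = 0" by simp
  qed
  ultimately have "g = 0" by (rule uniq[OF ind q0 q1])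
  then show ?thesis unfolding g_def c_def d_def by simp
qed



lemma core:
  fixes q :: "'a::field_char_0 fps"
  assumes lin: "lin_op \<delta>" and ind: "D_indicator \<delta> q" and q0: "q$0 = 0" and q1: "q$1 \<noteq> 0"
    and gb: "goncarov_basis \<delta> z t"
  shows "(\<lambda>n. fps_const (smult (inverse (fact n)) (t n))
              * lift_fps (fps_exp (z n) oo fps_inv q) * fps_X ^ n)
           sums (exp_x_fps oo lift_fps (fps_inv q))"
proof -
  define d where "d = fps_inv q"
  define T where "T n = fps_const (smult (inverse (fact n)) (t n)) * lift_fps (fps_exp (z n) oo d) * fps_X ^ n" for n
  have Tn: "T n $ m = (if n \<le> m then smult (poly (Pm d (m-n)) (z n) / fact n) (t n) else 0)" for n m
    unfolding T_def fps_X_power_mult_right_nth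
    by (simp add: Pm_poly mult.commute[of _ "[:_:]"] divide_inverse mult.commute[of "inverse _"])
  have "(\<lambda>N. \<Sum>n<N. T n) \<longlonglongrightarrow> (exp_x_fps oo lift_fps d)"
  proof (rule tendsto_fpsI)
    fix m
    show "\<forall>\<^sub>F N in sequentially. (\<Sum>n<N. T n) $ m = (exp_x_fps oo lift_fps d) $ m"
    proof (rule eventually_sequentiallyI[of "Suc m"])
      fix N assume N: "Suc m \<le> N"
      have "(\<Sum>n<N. T n) $ m = (\<Sum>n<N. T n $ m)" by (simp add: fps_sum_nth)
      also have "\<dots> = (\<Sum>n\<le>m. T n $ m)"
        by (rule sum.mono_neutral_right) (use N in \<open>auto simp: Tn\<close>)
      also have "\<dots> = (\<Sum>n\<le>m. smult (poly (Pm d (m-n)) (z n) / fact n) (t n))"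
        by (intro sum.cong refl) (simp add: Tn)
      also have "\<dots> = Pm d m" unfolding d_def by (rule expansion[OF lin ind q0 q1 gb, symmetric])
      also have "\<dots> = (exp_x_fps oo lift_fps d) $ m" by (simp add: exp_compose_nth)
      finally show "(\<Sum>n<N. T n) $ m = (exp_x_fps oo lift_fps d) $ m" .
    qed
  qed
  then show ?thesis unfolding sums_def T_def d_def .
qed

lemma fps_inv_X: "fps_inv (fps_X :: 'a::field fps) = fps_X"
  using fps_inv[of "fps_X :: 'a fps"] by simp

lemma lift_X: "lift_fps (fps_X :: 'a::comm_ring_1 fps) = fps_X"
  by (rule fps_ext) (simp add: lift_fps_def)

lemma pderiv_lin: "lin_op (pderiv :: 'a::field_char_0 poly \<Rightarrow> _)"
  unfolding lin_op_def by (simp add: pderiv_add pderiv_smult)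

lemma pderiv_ind: "D_indicator (pderiv :: 'a::field_char_0 poly \<Rightarrow> _) fps_X"
  unfolding D_indicator_def
proof
  fix p :: "'a poly"
  show "pderiv p = (\<Sum>k\<le>degree p. smult (fps_X $ k) ((pderiv ^^ k) p))"
  proof (cases "degree p")
    case 0
    then show ?thesis by (simp add: pderiv_eq_0_iff)
  next
    case (Suc e)
    have "(\<Sum>k\<le>degree p. smult (fps_X $ k) ((pderiv ^^ k) p)) = (\<Sum>k\<in>{1}. smult (fps_X $ k) ((pderiv ^^ k) p))"
      by (rule sum.mono_neutral_right) (use Suc in auto)
    then show ?thesis by simp
  qed
qed


theorem mainTheorem13:
  fixes \<delta> :: "'a::field_char_0 poly \<Rightarrow> 'a poly"
    and q :: "'a fps"
    and z :: "nat \<Rightarrow> 'a"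
    and t :: "nat \<Rightarrow> 'a poly"
  assumes "delta_operator \<delta>"
    and "D_indicator \<delta> q"
    and "goncarov_basis \<delta> z t"
  shows "(\<lambda>n. fps_const (smult (inverse (fact n)) (t n))
              * lift_fps (fps_exp (z n) oo fps_inv q) * fps_X ^ n)
           sums (exp_x_fps oo lift_fps (fps_inv q))
         \<and> (\<forall>t'. goncarov_basis pderiv z t' \<longrightarrow>
           (\<lambda>n. fps_const (smult (inverse (fact n)) (t' n))
              * lift_fps (fps_exp (z n)) * fps_X ^ n) sums exp_x_fps)"
  proof -
  have q: "q$0 = 0" "q$1 \<noteq> 0" using indicator_q0[OF assms(1,2)] by auto
  have lin: "lin_op \<delta>" using assms(1) unfolding delta_operator_def by blast
  show ?thesis
  proof (rule conjI)
    show "(\<lambda>n. fps_const (smult (inverse (fact n)) (t n))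
              * lift_fps (fps_exp (z n) oo fps_inv q) * fps_X ^ n)
           sums (exp_x_fps oo lift_fps (fps_inv q))"
      by (rule core[OF lin assms(2) q assms(3)])
  next
    show "\<forall>t'. goncarov_basis pderiv z t' \<longrightarrow>
           (\<lambda>n. fps_const (smult (inverse (fact n)) (t' n))
              * lift_fps (fps_exp (z n)) * fps_X ^ n) sums exp_x_fps"
  proof (intro allI impI)
    fix t' assume gb: "goncarov_basis pderiv z t'"
    have "(\<lambda>n. fps_const (smult (inverse (fact n)) (t' n))
              * lift_fps (fps_exp (z n) oo fps_inv fps_X) * fps_X ^ n)
           sums (exp_x_fps oo lift_fps (fps_inv fps_X))"
      by (rule core[OF pderiv_lin pderiv_ind _ _ gb]) auto
    then show "(\<lambda>n. fps_const (smult (inverse (fact n)) (t' n))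
              * lift_fps (fps_exp (z n)) * fps_X ^ n) sums exp_x_fps"
      by (simp add: fps_inv_X lift_X)
  qed
  qed
qed

end
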